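(* Let $\kappa$ be any cardinal, let $d\geq 1$, and let $\kappa_1,\dots,\kappa_d$ be uncountable regular cardinals such that $\kappa_1>\kappa$ and $\kappa_{i+1}>2^{\kappa_i}$ for all $i<d$. Then for every function $f:\kappa_1\times\cdots\times\kappa_d\to\kappa$ there exist stationary sets $\kappa_1'\subseteq\kappa_1,\dots,\kappa_d'\subseteq\kappa_d$ such that $f$ is constant on $\kappa_1'\times\cdots\times\kappa_d'$.
   Context: A subset of a regular uncountable cardinal $\nu$ is stationary if it meets every closed unbounded subset of $\nu$. *)

theory Defs
  imports Main "HOL-Library.FuncSet" "HOL-Library.Countable_Set"
begin

text \<open>A cardinal is represented, as in the HOL library (BNF_Cardinal_Order_Relation),
by a cardinal order relation r (Card_order r): a well-order on Field r of minimal
order type, i.e. an initial ordinal. (a,b) \<in> r means a \<le> b.\<close>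

definition strictly_below :: "'a rel \<Rightarrow> 'a \<Rightarrow> 'a \<Rightarrow> bool" where
  "strictly_below r a b \<longleftrightarrow> (a, b) \<in> r \<and> a \<noteq> b"

text \<open>C is closed: every limit point alpha of C (C below alpha nonempty and cofinal
in alpha, i.e. alpha = sup (C \<inter> alpha)) lies in C.\<close>
definition closed_in_ord :: "'a rel \<Rightarrow> 'a set \<Rightarrow> bool" where
  "closed_in_ord r C \<longleftrightarrow> C \<subseteq> Field r \<and>
     (\<forall>a \<in> Field r.
        ((\<exists>c \<in> C. strictly_below r c a) \<and>
         (\<forall>b. strictly_below r b a \<longrightarrow> (\<exists>c \<in> C. strictly_below r b c \<and> strictly_below r c a)))
        \<longrightarrow> a \<in> C)"

definition club :: "'a rel \<Rightarrow> 'a set \<Rightarrow> bool" where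
  "club r C \<longleftrightarrow> closed_in_ord r C \<and> cofinal C r"

definition stationary :: "'a rel \<Rightarrow> 'a set \<Rightarrow> bool" where
  "stationary r S \<longleftrightarrow> S \<subseteq> Field r \<and> (\<forall>C. club r C \<longrightarrow> S \<inter> C \<noteq> {})"

end

theory Submission
  imports Defs
begin

unbundle cardinal_syntax




lemma cnt_nat: "countable A \<longleftrightarrow> |A| \<le>o |UNIV::nat set|"
proof
  assume "countable A"
  then obtain f :: "_ \<Rightarrow> nat" where "inj_on f A" unfolding countable_def by blast
  then show "|A| \<le>o |UNIV::nat set|" using card_of_ordLeq[of A "UNIV::nat set"] by blast
next
  assume "|A| \<le>o |UNIV::nat set|"
  then obtain f :: "_ \<Rightarrow> nat" where "inj_on f A" using card_of_ordLeq[of A "UNIV::nat set"] by blast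
  then show "countable A" unfolding countable_def by blast
qed

lemma wo_facts:
  assumes "Card_order r"
  shows "trans r" "antisym r"
    "\<And>a b. a \<in> Field r \<Longrightarrow> b \<in> Field r \<Longrightarrow> (a,b) \<in> r \<or> (b,a) \<in> r"
    "\<And>a. a \<in> Field r \<Longrightarrow> (a,a) \<in> r"
    "\<And>B. B \<subseteq> Field r \<Longrightarrow> B \<noteq> {} \<Longrightarrow> \<exists>s\<in>B. \<forall>b\<in>B. (s,b) \<in> r"
proof -
  have w: "wo_rel r" using assms Card_order_wo_rel by blast
  show "trans r" using wo_rel.TRANS[OF w] .
  show "antisym r" using wo_rel.ANTISYM[OF w] .
  show "\<And>a b. a \<in> Field r \<Longrightarrow> b \<in> Field r \<Longrightarrow> (a,b) \<in> r \<or> (b,a) \<in> r"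
    using wo_rel.TOTALS[OF w] by blast
  show "\<And>a. a \<in> Field r \<Longrightarrow> (a,a) \<in> r"
    using wo_rel.REFL[OF w] by (simp add: refl_on_def)
  show "\<And>B. B \<subseteq> Field r \<Longrightarrow> B \<noteq> {} \<Longrightarrow> \<exists>s\<in>B. \<forall>b\<in>B. (s,b) \<in> r"
    using wo_rel.minim_in[OF w] wo_rel.minim_least[OF w] by blast
qed

lemma sb_le_trans:
  assumes "Card_order r" "strictly_below r a b" "(b,c) \<in> r"
  shows "strictly_below r a c"
  using assms wo_facts(1,2)[OF assms(1)] unfolding strictly_below_def
  by (metis antisymD transD)

lemma le_sb_trans:
  assumes "Card_order r" "(a,b) \<in> r" "strictly_below r b c"
  shows "strictly_below r a c"
  using assms wo_facts(1,2)[OF assms(1)] unfolding strictly_below_def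
  by (metis antisymD transD)

lemma bounded_small:
  assumes cr: "Card_order r" and reg: "regularCard r" and B: "B \<subseteq> Field r" and less: "|B| <o r"
  shows "\<exists>\<beta>\<in>Field r. \<forall>b\<in>B. (b,\<beta>) \<in> r"
proof -
  have "\<not> cofinal B r"
  proof
    assume "cofinal B r"
    then have "|B| =o r" using reg B unfolding regularCard_def by blast
    then show False using less not_ordLess_ordIso by blast
  qed
  then obtain a where a: "a \<in> Field r" "\<forall>b\<in>B. \<not> (a \<noteq> b \<and> (a,b) \<in> r)"
    unfolding cofinal_def by blast
  have "\<forall>b\<in>B. (b,a) \<in> r"
  proof
    fix b assume b: "b \<in> B"
    show "(b,a) \<in> r"
    proof (cases "a = b")
      case True then show ?thesis using wo_facts(4)[OF cr] a(1) by simp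
    next
      case False then show ?thesis using a b B wo_facts(3)[OF cr, of a b] by blast
    qed
  qed
  then show ?thesis using a(1) by blast
qed

lemma countable_small:
  assumes cr: "Card_order r" and unc: "\<not> countable (Field r)" and B: "countable B"
  shows "|B| <o r"
proof -
  have 1: "|B| \<le>o |UNIV::nat set|" using B cnt_nat[of B] by simp
  have "\<not> |Field r| \<le>o |UNIV::nat set|" using unc cnt_nat[of "Field r"] by simp
  then have 2: "|UNIV::nat set| <o |Field r|"
    using not_ordLeq_iff_ordLess[OF card_of_Well_order[of "UNIV::nat set"] card_of_Well_order[of "Field r"]] by simp
  have 3: "|Field r| =o r" using card_of_Field_ordIso[OF cr] .
  show ?thesis using ordLess_ordIso_trans[OF ordLeq_ordLess_trans[OF 1 2] 3] .
qed

lemma club_Inter: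
  assumes cr: "Card_order r" and unc: "\<not> countable (Field r)" and reg: "regularCard r"
    and I: "|I| <o r" "I \<noteq> {}" and cl: "\<forall>i\<in>I. club r (C i)"
  shows "club r (\<Inter>i\<in>I. C i)"
proof -
  have sub: "\<forall>i\<in>I. C i \<subseteq> Field r" using cl unfolding club_def closed_in_ord_def by blast
  have clo: "\<forall>i\<in>I. closed_in_ord r (C i)" using cl unfolding club_def by blast
  have cof: "\<forall>i\<in>I. cofinal (C i) r" using cl unfolding club_def by blast
  have closed: "closed_in_ord r (\<Inter>i\<in>I. C i)"
    unfolding closed_in_ord_def
  proof (intro conjI ballI impI)
    show "(\<Inter>i\<in>I. C i) \<subseteq> Field r" using sub I(2) by blast
  next
    fix a assume a: "a \<in> Field r"
      and h: "(\<exists>c\<in>\<Inter>i\<in>I. C i. strictly_below r c a) \<and>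
        (\<forall>b. strictly_below r b a \<longrightarrow> (\<exists>c\<in>\<Inter>i\<in>I. C i. strictly_below r b c \<and> strictly_below r c a))"
    show "a \<in> (\<Inter>i\<in>I. C i)"
    proof
      fix i assume i: "i \<in> I"
      have "(\<exists>c\<in>C i. strictly_below r c a) \<and>
        (\<forall>b. strictly_below r b a \<longrightarrow> (\<exists>c\<in>C i. strictly_below r b c \<and> strictly_below r c a))"
        using h i by blast
      then show "a \<in> C i" using clo i a unfolding closed_in_ord_def by blast
    qed
  qed
  have "\<forall>\<alpha>\<in>Field r. \<exists>\<beta>\<in>Field r. \<forall>i\<in>I. \<exists>c\<in>C i. strictly_below r \<alpha> c \<and> (c,\<beta>) \<in> r"
  proof
    fix \<alpha> assume \<alpha>: "\<alpha> \<in> Field r"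
    have "\<forall>i\<in>I. \<exists>c. c \<in> C i \<and> \<alpha> \<noteq> c \<and> (\<alpha>,c) \<in> r" using cof \<alpha> unfolding cofinal_def by blast
    from bchoice[OF this] obtain m where m: "\<forall>i\<in>I. m i \<in> C i \<and> \<alpha> \<noteq> m i \<and> (\<alpha>, m i) \<in> r" by blast
    have "|m ` I| <o r" using ordLeq_ordLess_trans[OF card_of_image I(1)] .
    moreover have "m ` I \<subseteq> Field r" using m sub by blast
    ultimately obtain \<beta> where \<beta>: "\<beta> \<in> Field r" "\<forall>b\<in>m ` I. (b,\<beta>) \<in> r"
      using bounded_small[OF cr reg] by blast
    show "\<exists>\<beta>\<in>Field r. \<forall>i\<in>I. \<exists>c\<in>C i. strictly_below r \<alpha> c \<and> (c,\<beta>) \<in> r"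
      using \<beta> m unfolding strictly_below_def by blast
  qed
  then have "\<forall>\<alpha>\<in>Field r. \<exists>\<beta>. \<beta> \<in> Field r \<and> (\<forall>i\<in>I. \<exists>c\<in>C i. strictly_below r \<alpha> c \<and> (c,\<beta>) \<in> r)" by blast
  from bchoice[OF this] obtain nxt where nxt: "\<forall>\<alpha>\<in>Field r. nxt \<alpha> \<in> Field r \<and>
      (\<forall>i\<in>I. \<exists>c\<in>C i. strictly_below r \<alpha> c \<and> (c, nxt \<alpha>) \<in> r)" by blast
  obtain i0 where i0: "i0 \<in> I" using I(2) by blast
  have nx: "\<And>\<alpha> i. \<alpha> \<in> Field r \<Longrightarrow> i \<in> I \<Longrightarrow> \<exists>c\<in>C i. strictly_below r \<alpha> c \<and> (c, nxt \<alpha>) \<in> r"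
    using nxt by blast
  have cofI: "cofinal (\<Inter>i\<in>I. C i) r"
    unfolding cofinal_def
  proof
    fix a assume a: "a \<in> Field r"
    define s where "s n = (nxt ^^ n) a" for n
    have sF: "s n \<in> Field r" for n
      by (induction n) (use a nxt in \<open>auto simp: s_def\<close>)
    have sS: "s (Suc n) = nxt (s n)" for n by (simp add: s_def)
    have lt: "strictly_below r (s n) (s (Suc n))" for n
    proof -
      obtain c where "c \<in> C i0" "strictly_below r (s n) c" "(c, s (Suc n)) \<in> r"
        using nx[OF sF[of n] i0] by (auto simp: sS)
      then show ?thesis using sb_le_trans[OF cr] by blast
    qed
    have mono: "(s m, s n) \<in> r" if "m \<le> n" for m n
      using that
    proof (induction n rule: dec_induct)
      case base then show ?case using wo_facts(4)[OF cr] sF by blast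
    next
      case (step k)
      then show ?case using lt[of k] wo_facts(1)[OF cr] unfolding strictly_below_def
        by (meson transD)
    qed
    have "|range s| <o r" using countable_small[OF cr unc, of "range s"] by simp
    then obtain \<beta> where "\<beta> \<in> Field r" "\<forall>b\<in>range s. (b,\<beta>) \<in> r"
      using bounded_small[OF cr reg] sF by blast
    then have Une: "{\<beta>\<in>Field r. \<forall>n. (s n, \<beta>) \<in> r} \<noteq> {}" by blast
    obtain t where t: "t \<in> Field r" "\<forall>n. (s n, t) \<in> r"
      and tl: "\<forall>b\<in>{\<beta>\<in>Field r. \<forall>n. (s n, \<beta>) \<in> r}. (t,b) \<in> r"
      using wo_facts(5)[OF cr, of "{\<beta>\<in>Field r. \<forall>n. (s n, \<beta>) \<in> r}"] Une by blast
    have below: "strictly_below r (s n) t" for n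
      using lt[of n] t(2) sb_le_trans[OF cr] by blast
    have "t \<in> C i" if i: "i \<in> I" for i
    proof -
      have c1: "\<exists>c\<in>C i. strictly_below r c t"
      proof -
        obtain c where "c \<in> C i" "(c, s (Suc 0)) \<in> r"
          using nx[OF sF[of 0] i] by (auto simp: sS)
        then show ?thesis using le_sb_trans[OF cr _ below[of "Suc 0"]] by blast
      qed
      have c2: "\<forall>b. strictly_below r b t \<longrightarrow> (\<exists>c\<in>C i. strictly_below r b c \<and> strictly_below r c t)"
      proof (intro allI impI)
        fix b assume b: "strictly_below r b t"
        then have bF: "b \<in> Field r" unfolding strictly_below_def by (meson FieldI1)
        have "\<exists>n. (s n, b) \<notin> r"
        proof (rule ccontr)
          assume "\<not> (\<exists>n. (s n, b) \<notin> r)"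
          then have "(t,b) \<in> r" using tl bF by blast
          then show False using b wo_facts(2)[OF cr] unfolding strictly_below_def
            by (meson antisymD)
        qed
        then obtain n where n: "(s n, b) \<notin> r" by blast
        then have "(b, s n) \<in> r" using wo_facts(3)[OF cr] bF sF by blast
        moreover have "b \<noteq> s n" using n wo_facts(4)[OF cr] bF by blast
        ultimately have bs: "strictly_below r b (s n)" unfolding strictly_below_def by blast
        obtain c where c: "c \<in> C i" "strictly_below r (s n) c" "(c, s (Suc n)) \<in> r"
          using nx[OF sF[of n] i] by (auto simp: sS)
        have "strictly_below r b c" using bs c(2) sb_le_trans[OF cr] unfolding strictly_below_def by blast
        moreover have "strictly_below r c t" using le_sb_trans[OF cr c(3) below[of "Suc n"]] .
        ultimately show "\<exists>c\<in>C i. strictly_below r b c \<and> strictly_below r c t" using c(1) by blast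
      qed
      show ?thesis using clo i t(1) c1 c2 unfolding closed_in_ord_def by blast
    qed
    moreover have "a \<noteq> t \<and> (a,t) \<in> r" using below[of 0] by (simp add: s_def strictly_below_def)
    ultimately show "\<exists>b\<in>\<Inter>i\<in>I. C i. a \<noteq> b \<and> (a,b) \<in> r" by blast
  qed
  show ?thesis using closed cofI unfolding club_def by blast
qed

lemma club_sub: "club r C \<Longrightarrow> C \<subseteq> Field r"
  unfolding club_def closed_in_ord_def by (elim conjE)

lemma club_cof: "club r C \<Longrightarrow> cofinal C r"
  unfolding club_def by (elim conjE)

lemma stat_part:
  assumes cr: "Card_order r" and unc: "\<not> countable (Field r)" and reg: "regularCard r"
    and V: "|V| <o r" and g: "g ` Field r \<subseteq> V"
  shows "\<exists>v\<in>V. stationary r {a\<in>Field r. g a = v}"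
proof (rule ccontr)
  assume na: "\<not> ?thesis"
  have "\<forall>v\<in>V. \<exists>C. club r C \<and> {a\<in>Field r. g a = v} \<inter> C = {}"
  proof
    fix v assume "v \<in> V"
    then have "\<not> stationary r {a\<in>Field r. g a = v}" using na by blast
    then show "\<exists>C. club r C \<and> {a\<in>Field r. g a = v} \<inter> C = {}"
      unfolding stationary_def by auto
  qed
  from bchoice[OF this] obtain C where C: "\<forall>v\<in>V. club r (C v) \<and> {a\<in>Field r. g a = v} \<inter> C v = {}" by blast
  have Fne: "Field r \<noteq> {}" using unc by auto
  then have Vne: "V \<noteq> {}" using g by blast
  have cl: "club r (\<Inter>v\<in>V. C v)" using club_Inter[OF cr unc reg V Vne] C by blast
  have cof: "cofinal (\<Inter>v\<in>V. C v) r" using club_cof[OF cl] .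
  have sb: "(\<Inter>v\<in>V. C v) \<subseteq> Field r" using club_sub[OF cl] .
  obtain a0 where "a0 \<in> Field r" using Fne by blast
  then obtain b where b: "b \<in> (\<Inter>v\<in>V. C v)" using cof unfolding cofinal_def by blast
  then have bF: "b \<in> Field r" using sb by blast
  then have gb: "g b \<in> V" using g by blast
  then have "b \<in> C (g b)" using b by blast
  moreover have "{a\<in>Field r. g a = g b} \<inter> C (g b) = {}" using C gb by blast
  ultimately show False using bF by blast
qed





lemma Card_order_Well: "Card_order r \<Longrightarrow> Well_order r"
  using card_order_on_well_order_on by blast

lemma my_Times_less:
  assumes INF: "\<not> finite C" and L1: "|A| <o |C|" and L2: "|B| <o |C|"
  shows "|A \<times> B| <o |C|"
proof (cases "finite (A \<times> B)")
  case True
  then show ?thesis using finite_ordLess_infinite[OF card_of_Well_order card_of_Well_order]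
    INF by (simp add: Field_card_of)
next
  case False
  then have ne: "A \<noteq> {}" "B \<noteq> {}" by auto
  have "|A| \<le>o |B| \<or> |B| \<le>o |A|" using ordLeq_total[OF card_of_Well_order card_of_Well_order] .
  then show ?thesis
  proof
    assume ab: "|A| \<le>o |B|"
    have "\<not> finite B"
    proof
      assume fB: "finite B"
      then have "finite A" using ab card_of_ordLeq_finite by blast
      then show False using False fB by simp
    qed
    then have "|A \<times> B| =o |B|" using card_of_Times_infinite[OF _ ne(1) ab] by blast
    then show ?thesis using ordIso_ordLess_trans L2 by blast
  next
    assume ab: "|B| \<le>o |A|"
    have "\<not> finite A"
    proof
      assume fA: "finite A"
      then have "finite B" using ab card_of_ordLeq_finite by blast
      then show False using False fA by simp
    qed
    then have "|A \<times> B| =o |A|" using card_of_Times_infinite[OF _ ne(2) ab] by blast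
    then show ?thesis using ordIso_ordLess_trans L1 by blast
  qed
qed

lemma my_Times_less_Field:
  assumes INF: "\<not> finite (Field r)" and r: "Card_order r" and L1: "|A| <o r" and L2: "|B| <o r"
  shows "|A \<times> B| <o r"
proof -
  have 1: "r =o |Field r|" using ordIso_symmetric[OF card_of_Field_ordIso[OF r]] .
  have 2: "|Field r| =o r" using card_of_Field_ordIso[OF r] .
  have "|A| <o |Field r|" using ordLess_ordIso_trans[OF L1 1] .
  moreover have "|B| <o |Field r|" using ordLess_ordIso_trans[OF L2 1] .
  ultimately have "|A \<times> B| <o |Field r|" using my_Times_less[OF INF] by blast
  then show ?thesis using ordLess_ordIso_trans[OF _ 2] by blast
qed

lemma my_Pow_mono:
  assumes "|A| \<le>o |B|"
  shows "|Pow A| \<le>o |Pow B|"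
proof -
  obtain h where h: "inj_on h A" "h ` A \<subseteq> B" using assms card_of_ordLeq[of A B] by blast
  have "inj_on (image h) (Pow A)"
    using h(1) by (simp add: inj_on_image_Pow)
  moreover have "image h ` Pow A \<subseteq> Pow B" using h(2) by auto
  ultimately show ?thesis using card_of_ordLeq[of "Pow A" "Pow B"] by blast
qed

lemma ks_mono:
  assumes card: "\<And>i. i < D \<Longrightarrow> Card_order (ks i)"
    and growth: "\<And>i. Suc i < D \<Longrightarrow> |Pow (Field (ks i))| <o ks (Suc i)"
  shows "i \<le> j \<Longrightarrow> j < D \<Longrightarrow> ks i \<le>o ks j"
proof (induction j)
  case 0
  then show ?case using ordLeq_reflexive[OF Card_order_Well[OF card]] by simp
next
  case (Suc j)
  show ?case
  proof (cases "i = Suc j")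
    case True
    then show ?thesis using ordLeq_reflexive[OF Card_order_Well[OF card[OF Suc.prems(2)]]] by simp
  next
    case False
    then have ij: "i \<le> j" using Suc.prems by simp
    have jD: "j < D" using Suc.prems by simp
    have 1: "ks i \<le>o ks j" using Suc.IH[OF ij jD] .
    have 2: "ks j =o |Field (ks j)|" using ordIso_symmetric[OF card_of_Field_ordIso[OF card[OF jD]]] .
    have 3: "|Field (ks j)| <o ks (Suc j)"
      using ordLess_transitive[OF card_of_Pow growth[OF Suc.prems(2)]] .
    show ?thesis using ordLess_imp_ordLeq[OF ordLeq_ordLess_trans[OF ordLeq_ordIso_trans[OF 1 2] 3]] .
  qed
qed

lemma sigma_eq: "Sigma I A = Sigma I B \<Longrightarrow> i \<in> I \<Longrightarrow> A i = B i"
  by (auto simp: set_eq_iff)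

lemma card_bound:
  assumes card: "\<And>i. i < Suc d \<Longrightarrow> Card_order (ks i)"
    and unc: "\<And>i. i < Suc d \<Longrightarrow> \<not> countable (Field (ks i))"
    and first: "|K| <o ks 0"
    and growth: "\<And>i. Suc i < Suc d \<Longrightarrow> |Pow (Field (ks i))| <o ks (Suc i)"
  shows "|Pow ({..<d} \<times> (\<Union>i<d. Field (ks i))) \<times> K| <o ks d"
proof -
  have cd: "Card_order (ks d)" using card by simp
  have inf: "\<not> finite (Field (ks d))" using unc[of d] countable_finite by blast
  have K: "|K| <o ks d" using ordLess_ordLeq_trans[OF first ks_mono[of "Suc d" ks, OF card growth, of 0 d]] by simp
  have P: "|Pow ({..<d} \<times> (\<Union>i<d. Field (ks i)))| <o ks d"
  proof (cases d)
    case 0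
    then have fin: "finite (Field (card_of (Pow ({..<d} \<times> (\<Union>i<d. Field (ks i))))))" by (simp add: Field_card_of)
    show ?thesis using finite_ordLess_infinite[OF card_of_Well_order Card_order_Well[OF cd] fin inf] .
  next
    case (Suc e)
    have eD: "e < Suc d" using Suc by simp
    have ce: "Card_order (ks e)" using card[OF eD] .
    have infB: "\<not> finite (Field (ks e))" using unc[OF eD] countable_finite by blast
    have Fi: "\<forall>i\<in>{..<d}. |Field (ks i)| \<le>o |Field (ks e)|"
    proof
      fix i assume "i \<in> {..<d}"
      then have ie: "i \<le> e" and iD: "i < Suc d" using Suc by auto
      have 1: "|Field (ks i)| =o ks i" using card_of_Field_ordIso[OF card[OF iD]] .
      have 2: "ks i \<le>o ks e" using ks_mono[of "Suc d" ks, OF card growth ie eD] .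
      have 3: "ks e =o |Field (ks e)|" using ordIso_symmetric[OF card_of_Field_ordIso[OF ce]] .
      show "|Field (ks i)| \<le>o |Field (ks e)|"
        using ordIso_ordLeq_trans[OF 1 ordLeq_ordIso_trans[OF 2 3]] .
    qed
    have fin: "finite (Field (card_of {..<d}))" by (simp add: Field_card_of)
    have infB': "\<not> finite (Field (card_of (Field (ks e))))" using infB by (simp add: Field_card_of)
    have I: "|{..<d}| \<le>o |Field (ks e)|"
      using ordLess_imp_ordLeq[OF finite_ordLess_infinite[OF card_of_Well_order card_of_Well_order fin infB']] .
    have U: "|\<Union>i<d. Field (ks i)| \<le>o |Field (ks e)|"
      using card_of_UNION_ordLeq_infinite[OF infB I Fi] .
    have T: "|{..<d} \<times> (\<Union>i<d. Field (ks i))| \<le>o |Field (ks e)|"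
      using card_of_Times_ordLeq_infinite_Field[OF infB' I U card_of_Card_order] .
    have "|Pow ({..<d} \<times> (\<Union>i<d. Field (ks i)))| \<le>o |Pow (Field (ks e))|"
      using my_Pow_mono[OF T] .
    moreover have "|Pow (Field (ks e))| <o ks d" using growth[of e] Suc by simp
    ultimately show ?thesis using ordLeq_ordLess_trans by blast
  qed
  show ?thesis using my_Times_less_Field[OF inf cd P K] .
qed





lemma main_gen:
  fixes K :: "'b set" and ks :: "nat \<Rightarrow> 'a rel"
  shows "\<And>f :: (nat \<Rightarrow> 'a) \<Rightarrow> 'b. (\<And>i. i < d \<Longrightarrow> Card_order (ks i)) \<Longrightarrow>
    (\<And>i. i < d \<Longrightarrow> \<not> countable (Field (ks i))) \<Longrightarrow>
    (\<And>i. i < d \<Longrightarrow> regularCard (ks i)) \<Longrightarrow> |K| <o ks 0 \<Longrightarrow>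
    (\<And>i. Suc i < d \<Longrightarrow> |Pow (Field (ks i))| <o ks (Suc i)) \<Longrightarrow>
    f \<in> (\<Pi>\<^sub>E i\<in>{..<d}. Field (ks i)) \<rightarrow> K \<Longrightarrow>
    \<exists>S. (\<forall>i<d. stationary (ks i) (S i)) \<and> (\<exists>c\<in>K. \<forall>x\<in>(\<Pi>\<^sub>E i\<in>{..<d}. S i). f x = c)"
proof (induction d)
  case 0
  have u: "(\<lambda>_. undefined) \<in> (\<Pi>\<^sub>E i\<in>{..<0::nat}. Field (ks i))" by simp
  then have fK: "f (\<lambda>_. undefined) \<in> K" using 0(6) by blast
  have "\<forall>x\<in>(\<Pi>\<^sub>E i\<in>{..<0::nat}. (\<lambda>_::nat. {}::'a set) i). f x = f (\<lambda>_. undefined)"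
    by simp
  then show ?case using fK by blast
next
  case (Suc d)
  have step: "\<forall>\<alpha>\<in>Field (ks d). \<exists>p. (\<forall>i<d. stationary (ks i) (fst p i)) \<and> snd p \<in> K \<and>
      (\<forall>x\<in>(\<Pi>\<^sub>E i\<in>{..<d}. fst p i). f (x(d:=\<alpha>)) = snd p)"
  proof
    fix \<alpha> assume \<alpha>: "\<alpha> \<in> Field (ks d)"
    have fa: "(\<lambda>x. f (x(d:=\<alpha>))) \<in> (\<Pi>\<^sub>E i\<in>{..<d}. Field (ks i)) \<rightarrow> K"
    proof
      fix x assume x: "x \<in> (\<Pi>\<^sub>E i\<in>{..<d}. Field (ks i))"
      have "x(d:=\<alpha>) \<in> (\<Pi>\<^sub>E i\<in>{..<Suc d}. Field (ks i))"
        using x \<alpha> by (auto simp: PiE_def extensional_def Pi_def)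
      then show "f (x(d:=\<alpha>)) \<in> K" using Suc.prems(6) by blast
    qed
    have "\<exists>S. (\<forall>i<d. stationary (ks i) (S i)) \<and> (\<exists>c\<in>K. \<forall>x\<in>(\<Pi>\<^sub>E i\<in>{..<d}. S i). f (x(d:=\<alpha>)) = c)"
      using Suc.IH[of "\<lambda>x. f (x(d:=\<alpha>))", OF _ _ _ Suc.prems(4) _ fa] Suc.prems(1,2,3,5) by simp
    then obtain S c where "\<forall>i<d. stationary (ks i) (S i)" "c \<in> K"
      "\<forall>x\<in>(\<Pi>\<^sub>E i\<in>{..<d}. S i). f (x(d:=\<alpha>)) = c" by blast
    then show "\<exists>p. (\<forall>i<d. stationary (ks i) (fst p i)) \<and> snd p \<in> K \<and>
      (\<forall>x\<in>(\<Pi>\<^sub>E i\<in>{..<d}. fst p i). f (x(d:=\<alpha>)) = snd p)"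
      by (intro exI[of _ "(S,c)"]) simp
  qed
  from bchoice[OF step] obtain G where G: "\<forall>\<alpha>\<in>Field (ks d). (\<forall>i<d. stationary (ks i) (fst (G \<alpha>) i)) \<and> snd (G \<alpha>) \<in> K \<and>
      (\<forall>x\<in>(\<Pi>\<^sub>E i\<in>{..<d}. fst (G \<alpha>) i). f (x(d:=\<alpha>)) = snd (G \<alpha>))" by blast
  define U where "U = (\<Union>i<d. Field (ks i))"
  define g where "g \<alpha> = (SIGMA i:{..<d}. fst (G \<alpha>) i, snd (G \<alpha>))" for \<alpha>
  have gV: "g ` Field (ks d) \<subseteq> Pow ({..<d} \<times> U) \<times> K"
  proof
    fix v assume "v \<in> g ` Field (ks d)"
    then obtain \<alpha> where \<alpha>: "\<alpha> \<in> Field (ks d)" "v = g \<alpha>" by blast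
    have "\<forall>i<d. fst (G \<alpha>) i \<subseteq> Field (ks i)" using G \<alpha>(1) unfolding stationary_def by blast
    then have "(SIGMA i:{..<d}. fst (G \<alpha>) i) \<subseteq> {..<d} \<times> U" unfolding U_def by auto
    then show "v \<in> Pow ({..<d} \<times> U) \<times> K" using G \<alpha> unfolding g_def by auto
  qed
  have V: "|Pow ({..<d} \<times> U) \<times> K| <o ks d"
    unfolding U_def using card_bound[of d ks K] Suc.prems(1,2,4,5) by blast
  have V': "|g ` Field (ks d)| <o ks d"
    using ordLeq_ordLess_trans[OF card_of_mono1[OF gV] V] .
  have cd: "Card_order (ks d)" "\<not> countable (Field (ks d))" "regularCard (ks d)"
    using Suc.prems(1,2,3) by auto
  obtain v where v: "v \<in> g ` Field (ks d)" and A: "stationary (ks d) {a\<in>Field (ks d). g a = v}"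
    using stat_part[OF cd V' subset_refl] by blast
  obtain \<alpha>0 where \<alpha>0: "\<alpha>0 \<in> Field (ks d)" "v = g \<alpha>0" using v by blast
  define A where "A = {a\<in>Field (ks d). g a = v}"
  define S where "S = (\<lambda>i. if i < d then fst (G \<alpha>0) i else A)"
  have comp: "fst (G a) i = fst (G \<alpha>0) i" if "a \<in> A" "i < d" for a i
  proof -
    have "g a = g \<alpha>0" using that \<alpha>0 unfolding A_def by simp
    then have "(SIGMA i:{..<d}. fst (G a) i) = (SIGMA i:{..<d}. fst (G \<alpha>0) i)" unfolding g_def by simp
    then show ?thesis using sigma_eq that(2) by blast
  qed
  have sndc: "snd (G a) = snd (G \<alpha>0)" if "a \<in> A" for a
  proof -
    have "g a = g \<alpha>0" using that \<alpha>0 unfolding A_def by simp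
    then show ?thesis unfolding g_def by simp
  qed
  have stat: "\<forall>i<Suc d. stationary (ks i) (S i)"
  proof (intro allI impI)
    fix i assume i: "i < Suc d"
    show "stationary (ks i) (S i)"
    proof (cases "i < d")
      case True
      then show ?thesis using G \<alpha>0(1) unfolding S_def by auto
    next
      case False
      then have "i = d" using i by simp
      then show ?thesis using A unfolding S_def A_def by simp
    qed
  qed
  have const: "\<forall>x\<in>(\<Pi>\<^sub>E i\<in>{..<Suc d}. S i). f x = snd (G \<alpha>0)"
  proof
    fix x assume x: "x \<in> (\<Pi>\<^sub>E i\<in>{..<Suc d}. S i)"
    define a where "a = x d"
    have aA: "a \<in> A" using x unfolding a_def S_def by (auto simp: PiE_def Pi_def)
    then have aF: "a \<in> Field (ks d)" unfolding A_def by blast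
    have x': "x(d:=undefined) \<in> (\<Pi>\<^sub>E i\<in>{..<d}. fst (G a) i)"
      using x comp[OF aA] unfolding S_def by (auto simp: PiE_def Pi_def extensional_def) (metis less_SucI)
    have "f ((x(d:=undefined))(d:=a)) = snd (G a)" using G aF x' by blast
    moreover have "(x(d:=undefined))(d:=a) = x" unfolding a_def by simp
    ultimately show "f x = snd (G \<alpha>0)" using sndc[OF aA] by simp
  qed
  have "snd (G \<alpha>0) \<in> K" using G \<alpha>0(1) by blast
  then show ?case using stat const by blast
qed

theorem mainTheorem3:
  fixes K :: "'b set"
    and d :: nat
    and ks :: "nat \<Rightarrow> 'a rel"
    and f :: "(nat \<Rightarrow> 'a) \<Rightarrow> 'b"
  assumes d: "d \<ge> 1"
    and card: "\<And>i. i < d \<Longrightarrow> Card_order (ks i)"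
    and unc: "\<And>i. i < d \<Longrightarrow> \<not> countable (Field (ks i))"
    and reg: "\<And>i. i < d \<Longrightarrow> regularCard (ks i)"
    and first: "(card_of K, ks 0) \<in> ordLess"
    and growth: "\<And>i. Suc i < d \<Longrightarrow> (card_of (Pow (Field (ks i))), ks (Suc i)) \<in> ordLess"
    and f: "f \<in> (\<Pi>\<^sub>E i\<in>{..<d}. Field (ks i)) \<rightarrow> K"
  shows "\<exists>S :: nat \<Rightarrow> 'a set. (\<forall>i<d. stationary (ks i) (S i)) \<and>
           (\<exists>c. \<forall>x \<in> (\<Pi>\<^sub>E i\<in>{..<d}. S i). f x = c)"
  using main_gen[OF card unc reg first growth f] by blast

end
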